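(* Let $c$ be a positive integer and let $G=(V,E)$ be a graph on $n$ vertices such that at least $3n/4$ of its vertices have degree at least $4c$. Then $G$ has at most $5n/6$ $c$-edge-connected components.
   Context: Graphs are undirected and may have parallel edges but no self-loops. A graph is $c$-edge-connected if it has no cut of size $<c$; a single vertex is $c$-edge-connected. The $c$-edge-connected components are the maximal induced $c$-edge-connected subgraphs; their vertex sets partition $V$. *)

theory Defs
  imports Main
begin

text \<open>A finite undirected multigraph without self-loops on vertex set V is given by an
  edge-multiplicity function m: m u v is the number of parallel edges between u and v.\<close>

definition multigraph :: "'a set \<Rightarrow> ('a \<Rightarrow> 'a \<Rightarrow> nat) \<Rightarrow> bool" where
  "multigraph V m \<longleftrightarrow> finite V \<and> (\<forall>u v. m u v = m v u) \<and> (\<forall>v. m v v = 0)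
     \<and> (\<forall>u v. m u v \<noteq> 0 \<longrightarrow> u \<in> V \<and> v \<in> V)"

definition degree :: "'a set \<Rightarrow> ('a \<Rightarrow> 'a \<Rightarrow> nat) \<Rightarrow> 'a \<Rightarrow> nat" where
  "degree V m v = (\<Sum>u\<in>V. m v u)"

definition edges_between :: "('a \<Rightarrow> 'a \<Rightarrow> nat) \<Rightarrow> 'a set \<Rightarrow> 'a set \<Rightarrow> nat" where
  "edges_between m S T = (\<Sum>u\<in>S. \<Sum>w\<in>T. m u w)"

definition edge_connected_on :: "nat \<Rightarrow> ('a \<Rightarrow> 'a \<Rightarrow> nat) \<Rightarrow> 'a set \<Rightarrow> bool" where
  "edge_connected_on c m U \<longleftrightarrow>
     (\<forall>S. S \<subseteq> U \<and> S \<noteq> {} \<and> S \<noteq> U \<longrightarrow> edges_between m S (U - S) \<ge> c)"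

definition ec_components :: "nat \<Rightarrow> 'a set \<Rightarrow> ('a \<Rightarrow> 'a \<Rightarrow> nat) \<Rightarrow> 'a set set" where
  "ec_components c V m = {U. U \<subseteq> V \<and> U \<noteq> {} \<and> edge_connected_on c m U \<and>
     (\<forall>W. U \<subset> W \<and> W \<subseteq> V \<longrightarrow> \<not> edge_connected_on c m W)}"

end

theory Submission
  imports Defs
begin

lemma eb_mono:
  assumes "S \<subseteq> S'" "T \<subseteq> T'" "finite S'" "finite T'"
  shows "edges_between m S T \<le> edges_between m S' T'"
proof -
  have "edges_between m S T \<le> (\<Sum>u\<in>S. \<Sum>w\<in>T'. m u w)"
    unfolding edges_between_def
    by (rule sum_mono, rule sum_mono2) (use assms in auto)
  also have "\<dots> \<le> edges_between m S' T'"
    unfolding edges_between_def by (rule sum_mono2) (use assms in auto)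
  finally show ?thesis .
qed

lemma eb_split:
  assumes "edge_connected_on c m C" "C \<subseteq> U" "finite U" "S \<subseteq> U" "S \<inter> C \<noteq> {}" "C - S \<noteq> {}"
  shows "c \<le> edges_between m S (U - S)"
proof -
  have "c \<le> edges_between m (S \<inter> C) (C - (S \<inter> C))"
    using assms(1,5,6) unfolding edge_connected_on_def by blast
  also have "\<dots> \<le> edges_between m S (U - S)"
    by (rule eb_mono) (use assms finite_subset[OF assms(4,3)] in auto)
  finally show ?thesis .
qed

lemma eb_Union_left:
  assumes "\<forall>A\<in>F. finite A" "\<forall>A\<in>F. \<forall>B\<in>F. A \<noteq> B \<longrightarrow> A \<inter> B = {}"
  shows "edges_between m (\<Union>F) T = (\<Sum>C\<in>F. edges_between m C T)"
  unfolding edges_between_def using sum.Union_disjoint[OF assms] by simp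

lemma eb_Un_right:
  assumes "T1 \<inter> T2 = {}" "finite T1" "finite T2"
  shows "edges_between m S (T1 \<union> T2) = edges_between m S T1 + edges_between m S T2"
  unfolding edges_between_def using assms by (simp add: sum.union_disjoint sum.distrib)

lemma eb_sym:
  assumes "\<forall>u v. m u v = m v u"
  shows "edges_between m S T = edges_between m T S"
  unfolding edges_between_def using assms by (subst sum.swap) simp

lemma comp_props:
  assumes "C \<in> ec_components c V m"
  shows "C \<subseteq> V" "C \<noteq> {}" "edge_connected_on c m C"
    "\<And>W. C \<subset> W \<Longrightarrow> W \<subseteq> V \<Longrightarrow> \<not> edge_connected_on c m W"
  using assms unfolding ec_components_def by auto

lemma comp_disj:
  assumes "finite V" "C1 \<in> ec_components c V m" "C2 \<in> ec_components c V m" "C1 \<inter> C2 \<noteq> {}"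
  shows "C1 = C2"
proof -
  have f: "finite (C1 \<union> C2)" using comp_props(1)[OF assms(2)] comp_props(1)[OF assms(3)] assms(1)
    by (meson finite_Un finite_subset)
  have ec: "edge_connected_on c m (C1 \<union> C2)"
    unfolding edge_connected_on_def
  proof (intro allI impI)
    fix S assume S: "S \<subseteq> C1 \<union> C2 \<and> S \<noteq> {} \<and> S \<noteq> C1 \<union> C2"
    show "c \<le> edges_between m S (C1 \<union> C2 - S)"
    proof (cases "S \<inter> C1 \<noteq> {} \<and> C1 - S \<noteq> {}")
      case True
      then show ?thesis using eb_split[OF comp_props(3)[OF assms(2)], of "C1 \<union> C2" S] f S by auto
    next
      case F1: False
      show ?thesis
      proof (cases "S \<inter> C2 \<noteq> {} \<and> C2 - S \<noteq> {}")
        case True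
        then show ?thesis using eb_split[OF comp_props(3)[OF assms(3)], of "C1 \<union> C2" S] f S by auto
      next
        case False
        obtain x where "x \<in> C1" "x \<in> C2" using assms(4) by blast
        then have False using F1 False S by blast
        then show ?thesis ..
      qed
    qed
  qed
  have "C1 \<union> C2 \<subseteq> V" using comp_props(1)[OF assms(2)] comp_props(1)[OF assms(3)] by blast
  then have "\<not> C1 \<subset> C1 \<union> C2" "\<not> C2 \<subset> C1 \<union> C2"
    using comp_props(4)[OF assms(2)] comp_props(4)[OF assms(3)] ec by blast+
  then show ?thesis by blast
qed

lemma comp_cover:
  assumes "finite V" "v \<in> V"
  shows "\<exists>C \<in> ec_components c V m. v \<in> C"
proof -
  let ?A = "{W. {v} \<subseteq> W \<and> W \<subseteq> V \<and> edge_connected_on c m W}"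
  have "?A \<subseteq> Pow V" by blast
  then have finA: "finite ?A" using assms(1) by (meson finite_Pow_iff finite_subset)
  have ec1: "edge_connected_on c m {v}"
    unfolding edge_connected_on_def by (auto simp: subset_singleton_iff)
  have A1: "{v} \<in> ?A" using assms(2) ec1 by blast
  have A2: "?A \<noteq> {}" using A1 by blast
  obtain W where W: "W \<in> ?A" "\<forall>b\<in>?A. W \<le> b \<longrightarrow> W = b"
    using finite_has_maximal[OF finA A2] by blast
  have W1: "W \<subseteq> V" "v \<in> W" "edge_connected_on c m W" using W(1) by auto
  have W2: "\<not> edge_connected_on c m W'" if "W \<subset> W'" "W' \<subseteq> V" for W'
  proof
    assume "edge_connected_on c m W'"
    then have "W' \<in> ?A" using that W1 by auto
    then show False using W(2) that by auto
  qed
  have "W \<in> ec_components c V m"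
    unfolding ec_components_def using W1 W2 by blast
  then show ?thesis using W by auto
qed


lemma inter_bound:
  assumes mg: "multigraph V m"
  shows "F \<subseteq> ec_components c V m \<Longrightarrow> F \<noteq> {} \<Longrightarrow>
    (\<Sum>C\<in>F. edges_between m C (\<Union>F - C)) \<le> 2 * (c - 1) * (card F - 1)"
proof (induct "card F" arbitrary: F rule: less_induct)
  case less
  have finV: "finite V" using mg unfolding multigraph_def by auto
  have "ec_components c V m \<subseteq> Pow V" unfolding ec_components_def by blast
  then have finK: "finite (ec_components c V m)" using finV by (meson finite_Pow_iff finite_subset)
  have finF: "finite F" using finite_subset[OF less(2) finK] .
  have sub: "\<And>C. C \<in> F \<Longrightarrow> C \<subseteq> V" "\<And>C. C \<in> F \<Longrightarrow> C \<noteq> {}"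
    using comp_props(1,2) less(2) by blast+
  have finC: "\<And>C. C \<in> F \<Longrightarrow> finite C" using sub finV finite_subset by blast
  have disj: "\<And>C D. C \<in> F \<Longrightarrow> D \<in> F \<Longrightarrow> C \<noteq> D \<Longrightarrow> C \<inter> D = {}"
    using comp_disj[OF finV] less(2) by blast
  define X where "X = \<Union>F"
  have XV: "X \<subseteq> V" using sub X_def by blast
  have finX: "finite X" using XV finV finite_subset by blast
  show ?case
  proof (cases "card F = 1")
    case True
    then obtain C where "F = {C}" using card_1_singletonE by blast
    then show ?thesis by (simp add: edges_between_def)
  next
    case False
    then have cF: "card F \<ge> 2" using less(3) finF by (cases "card F") auto
    obtain C0 where C0: "C0 \<in> F" using less(3) by blast
    have "\<exists>C1 \<in> F. C1 \<noteq> C0"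
    proof (rule ccontr)
      assume "\<not> ?thesis" then have "F = {C0}" using C0 by blast
      then show False using cF by simp
    qed
    then obtain C1 where C1: "C1 \<in> F" "C1 \<noteq> C0" by blast
    have "C0 \<subset> X" using C0 C1 disj[OF C1(1) C0] sub(2)[OF C1(1)] X_def by blast
    then have "\<not> edge_connected_on c m X"
      using comp_props(4) less(2) C0 XV by blast
    then obtain S where S: "S \<subseteq> X" "S \<noteq> {}" "S \<noteq> X" "edges_between m S (X - S) < c"
      unfolding edge_connected_on_def by (auto simp: not_le)
    have dich: "C \<subseteq> S \<or> C \<inter> S = {}" if "C \<in> F" for C
    proof (rule ccontr)
      assume "\<not> ?thesis"
      then have "c \<le> edges_between m S (X - S)"
        using eb_split[OF comp_props(3), of C c V m X S] that less(2) X_def finX S(1) by blast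
      then show False using S(4) by simp
    qed
    define F1 where "F1 = {C\<in>F. C \<subseteq> S}"
    define F2 where "F2 = {C\<in>F. C \<inter> S = {}}"
    have FU: "F = F1 \<union> F2" using dich F1_def F2_def by blast
    have Fd: "F1 \<inter> F2 = {}" using sub(2) F1_def F2_def by blast
    have U1: "\<Union>F1 = S" using S(1) X_def dich F1_def by blast
    have U2: "\<Union>F2 = X - S" using S(1) X_def dich F2_def by blast
    have ne1: "F1 \<noteq> {}" using U1 S(2) by blast
    have ne2: "F2 \<noteq> {}" using U2 S(1,3) by blast
    have fin1: "finite F1" "finite F2" using finF FU by auto
    have cardF: "card F = card F1 + card F2" using FU Fd fin1 card_Un_disjoint by metis
    have c1: "card F1 \<ge> 1" "card F2 \<ge> 1" using ne1 ne2 fin1 by (auto simp: Suc_le_eq card_gt_0_iff)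
    have IH1: "(\<Sum>C\<in>F1. edges_between m C (\<Union>F1 - C)) \<le> 2 * (c - 1) * (card F1 - 1)"
      using less(1)[of F1] c1 cardF less(2) ne1 FU by auto
    have IH2: "(\<Sum>C\<in>F2. edges_between m C (\<Union>F2 - C)) \<le> 2 * (c - 1) * (card F2 - 1)"
      using less(1)[of F2] c1 cardF less(2) ne2 FU by auto
    have pw: "\<forall>A\<in>F1. \<forall>B\<in>F1. A \<noteq> B \<longrightarrow> A \<inter> B = {}" "\<forall>A\<in>F2. \<forall>B\<in>F2. A \<noteq> B \<longrightarrow> A \<inter> B = {}"
      "\<forall>A\<in>F1. finite A" "\<forall>A\<in>F2. finite A"
      using disj finC FU by blast+
    have finS: "finite S" "finite (X - S)" using finX S(1) finite_subset by auto
    have e1: "edges_between m C (X - C) = edges_between m C (\<Union>F1 - C) + edges_between m C (X - S)"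
      if "C \<in> F1" for C
    proof -
      have "X - C = (\<Union>F1 - C) \<union> (X - S)" using that U1 S(1) F1_def by blast
      then show ?thesis using eb_Un_right[of "\<Union>F1 - C" "X - S" m C] U1 finS by auto
    qed
    have e2: "edges_between m C (X - C) = edges_between m C (\<Union>F2 - C) + edges_between m C S"
      if "C \<in> F2" for C
    proof -
      have "X - C = (\<Union>F2 - C) \<union> S" using that U2 S(1) F2_def by blast
      then show ?thesis using eb_Un_right[of "\<Union>F2 - C" S m C] U2 finS by auto
    qed
    have symm: "\<forall>u v. m u v = m v u" using mg unfolding multigraph_def by auto
    have "(\<Sum>C\<in>F. edges_between m C (\<Union>F - C))
        = (\<Sum>C\<in>F1. edges_between m C (X - C)) + (\<Sum>C\<in>F2. edges_between m C (X - C))"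
      using FU Fd fin1 X_def by (simp add: sum.union_disjoint)
    also have "\<dots> = (\<Sum>C\<in>F1. edges_between m C (\<Union>F1 - C)) + (\<Sum>C\<in>F1. edges_between m C (X - S))
       + ((\<Sum>C\<in>F2. edges_between m C (\<Union>F2 - C)) + (\<Sum>C\<in>F2. edges_between m C S))"
      using e1 e2 by (simp add: sum.distrib)
    also have "(\<Sum>C\<in>F1. edges_between m C (X - S)) = edges_between m S (X - S)"
      using eb_Union_left[OF pw(3,1), of m "X - S"] U1 by simp
    also have "(\<Sum>C\<in>F2. edges_between m C S) = edges_between m S (X - S)"
      using eb_Union_left[OF pw(4,2), of m S] U2 eb_sym[OF symm] by simp
    finally have eq: "(\<Sum>C\<in>F. edges_between m C (\<Union>F - C)) =
       (\<Sum>C\<in>F1. edges_between m C (\<Union>F1 - C)) + (\<Sum>C\<in>F2. edges_between m C (\<Union>F2 - C))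
       + 2 * edges_between m S (X - S)" by simp
    have le: "edges_between m S (X - S) \<le> c - 1" using S(4) by simp
    define a where "a = card F1 - 1"
    define b where "b = card F2 - 1"
    have ab: "card F1 = Suc a" "card F2 = Suc b" using c1 a_def b_def by auto
    have ar: "\<And>d::nat. 2 * d * (card F1 - 1) + 2 * d * (card F2 - 1) + 2 * d
        = 2 * d * (card F - 1)" using ab cardF by (simp add: algebra_simps)
    have "2 * (c - 1) * (card F1 - 1) + 2 * (c - 1) * (card F2 - 1) + 2 * (c - 1)
        = 2 * (c - 1) * (card F - 1)" by (rule ar)
    then show ?thesis using eq IH1 IH2 le by linarith
  qed
qed


theorem lemma2:
  fixes V :: "'a set" and m :: "'a \<Rightarrow> 'a \<Rightarrow> nat" and c :: nat
  assumes "multigraph V m"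
    and "c > 0"
    and "4 * card {v \<in> V. degree V m v \<ge> 4 * c} \<ge> 3 * card V"
  shows "6 * card (ec_components c V m) \<le> 5 * card V"
proof -
  define K where "K = ec_components c V m"
  have finV: "finite V" and mvv: "\<And>v. m v v = 0"
    using assms(1) unfolding multigraph_def by auto
  have "K \<subseteq> Pow V" unfolding K_def ec_components_def by blast
  then have finK: "finite K" using finV by (meson finite_Pow_iff finite_subset)
  have Ksub: "\<And>C. C \<in> K \<Longrightarrow> C \<subseteq> V" "\<And>C. C \<in> K \<Longrightarrow> C \<noteq> {}"
    using comp_props(1,2) K_def by blast+
  have finC: "\<And>C. C \<in> K \<Longrightarrow> finite C" using Ksub finV finite_subset by blast
  have disj: "\<And>C D. C \<in> K \<Longrightarrow> D \<in> K \<Longrightarrow> C \<noteq> D \<Longrightarrow> C \<inter> D = {}"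
    using comp_disj[OF finV] K_def by blast
  have cover: "\<Union>K = V"
  proof
    show "\<Union>K \<subseteq> V" using Ksub by blast
    show "V \<subseteq> \<Union>K" using comp_cover[OF finV] K_def by blast
  qed
  show ?thesis
  proof (cases "V = {}")
    case True
    then have "K = {}" using Ksub by blast
    then show ?thesis using K_def by simp
  next
    case False
    then have Kne: "K \<noteq> {}" using cover by blast
    define k where "k = card K"
    have E: "(\<Sum>C\<in>K. edges_between m C (V - C)) \<le> 2 * (c - 1) * (k - 1)"
      using inter_bound[OF assms(1), of K c] K_def Kne cover k_def by simp
    define Sg where "Sg = {C\<in>K. card C = 1}"
    define P where "P = \<Union>Sg"
    define H where "H = {v \<in> V. degree V m v \<ge> 4 * c}"
    have SgK: "Sg \<subseteq> K" using Sg_def by blast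
    have finSg: "finite Sg" using SgK finK finite_subset by blast
    have pwK: "pairwise disjnt K" using disj unfolding pairwise_def disjnt_def by blast
    have pwSg: "pairwise disjnt Sg" using pairwise_subset[OF pwK SgK] .
    have cardP: "card P = card Sg"
      using card_Union_disjoint[OF pwSg] finC SgK P_def Sg_def by auto
    have cardV: "card V = (\<Sum>C\<in>K. card C)"
      using card_Union_disjoint[OF pwK] finC cover by auto
    have s1: "(\<Sum>C\<in>K. card C) = (\<Sum>C\<in>K - Sg. card C) + (\<Sum>C\<in>Sg. card C)"
      using sum.subset_diff[OF SgK finK] by simp
    have s2: "(\<Sum>C\<in>Sg. card C) = card Sg" using Sg_def by simp
    have s3: "(\<Sum>C\<in>K - Sg. card C) \<ge> (\<Sum>C\<in>K - Sg. 2)"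
    proof (rule sum_mono)
      fix C assume "C \<in> K - Sg"
      then have "card C \<noteq> 1" "card C \<noteq> 0" using Sg_def finC Ksub(2) by auto
      then show "2 \<le> card C" by linarith
    qed
    have nV: "card V \<ge> 2 * card (K - Sg) + card Sg" using cardV s1 s2 s3 by simp
    have cKS: "card (K - Sg) = k - card Sg" using card_Diff_subset[OF finSg SgK] k_def by simp
    have sgk: "card Sg \<le> k" using card_mono[OF finK SgK] k_def by simp
    have degeq: "edges_between m C (V - C) = (\<Sum>v\<in>C. degree V m v)" if CS: "C \<in> Sg" for C
    proof -
      have "card C = 1" using CS Sg_def by blast
      then obtain v where v: "C = {v}" using card_1_singletonE by blast
      have vV: "v \<in> V" using v CS SgK Ksub by blast
      have "degree V m v = m v v + (\<Sum>w\<in>V - {v}. m v w)"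
        unfolding degree_def using sum.remove[OF finV vV] by simp
      then show ?thesis using v mvv unfolding edges_between_def by simp
    qed
    have pwSg': "\<forall>A\<in>Sg. \<forall>B\<in>Sg. A \<noteq> B \<longrightarrow> A \<inter> B = {}" "\<forall>A\<in>Sg. finite A"
      using disj finC SgK by blast+
    have "(\<Sum>C\<in>Sg. edges_between m C (V - C)) \<le> (\<Sum>C\<in>K. edges_between m C (V - C))"
      by (rule sum_mono2[OF finK SgK]) simp
    moreover have "(\<Sum>C\<in>Sg. edges_between m C (V - C)) = (\<Sum>v\<in>P. degree V m v)"
      using degeq sum.Union_disjoint[OF pwSg'(2,1), of "degree V m"] P_def by simp
    moreover have "P \<subseteq> V" using P_def SgK Ksub by blast
    then have finP: "finite P" using finV finite_subset by blast
    then have "(\<Sum>v\<in>P \<inter> H. degree V m v) \<le> (\<Sum>v\<in>P. degree V m v)"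
      by (intro sum_mono2) auto
    moreover have "(\<Sum>v\<in>P \<inter> H. 4 * c) \<le> (\<Sum>v\<in>P \<inter> H. degree V m v)"
      by (rule sum_mono) (simp add: H_def)
    moreover have "(\<Sum>v\<in>P \<inter> H. 4 * c) = 4 * c * card (P \<inter> H)" by simp
    ultimately have "4 * c * card (P \<inter> H) \<le> 2 * (c - 1) * (k - 1)"
      using E by linarith
    also have "\<dots> \<le> 2 * c * (k - 1)" by simp
    finally have "2 * c * (2 * card (P \<inter> H)) \<le> 2 * c * (k - 1)" by (simp add: algebra_simps)
    then have x: "2 * card (P \<inter> H) \<le> k - 1" using assms(2) by simp
    have "P \<union> H \<subseteq> V" using \<open>P \<subseteq> V\<close> H_def by blast
    then have "card (P \<union> H) \<le> card V" using card_mono finV by blast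
    moreover have "card (P \<union> H) + card (P \<inter> H) = card P + card H"
      using card_Un_Int[OF finP] finV H_def by simp
    ultimately have y: "card P + card H \<le> card (P \<inter> H) + card V" by simp
    have h: "4 * card H \<ge> 3 * card V" using assms(3) H_def by simp
    have kpos: "k \<ge> 1" using Kne finK k_def by (simp add: Suc_le_eq card_gt_0_iff)
    have kk: "card (ec_components c V m) = k" using K_def k_def by simp
    have "6 * k \<le> 5 * card V" using x y h nV cKS sgk cardP kpos by linarith
    then show ?thesis using kk by simp
  qed
qed

end
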